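(* Let $0=X_0<\dots<X_K=1$ be a mesh of $K\ge1$ elements, each carrying $p+1$ Gauss–Lobatto nodes ($p\ge1$), with $N+1=Kp+1$ global nodes, global unknown vector $\mathbf{U}=(\bar u_0,\dots,\bar u_N)^T$ and restriction matrices $R_e$. Let $a\ge0$ be constant and let $\varepsilon_j(t)\ge0$, $j=0,\dots,N$, be continuous global nodal diffusion coefficients; set $\mathcal{E}^e=\mathrm{diag}(R_e(\varepsilon_0,\dots,\varepsilon_N)^T)$. Define the assembled matrices $$\mathcal{P}=\sum_e R_e^T\mathcal{P}^eR_e,\quad \mathcal{Q}_x=\sum_eR_e^T\mathcal{Q}_x^eR_e,\quad \mathcal{A}=\sum_eR_e^T(\sqrt{\mathcal{E}^e}\mathcal{D}_x^e)^T\mathcal{P}^e(\sqrt{\mathcal{E}^e}\mathcal{D}_x^e)R_e,$$ and let $\delta_0:=(\mathcal{D}_x^1R_1\mathbf{U})_0$ and $\delta_N:=(\mathcal{D}_x^KR_K\mathbf{U})_p$ (the discrete derivatives at $x=0$ and $x=1$ from the first and last element). Let $\mathbf{U}(t)$ be a $C^1$ solution of $$\mathcal{P}\frac{d\mathbf{U}}{dt}+a\mathcal{Q}_x\mathbf{U}=-\mathcal{A}\mathbf{U}-\varepsilon_0\delta_0E_0+\varepsilon_N\delta_NE_N+\sigma_0E_0\big[a\bar u_0-\varepsilon_0\delta_0-g_0\big]+\sigma_NE_N\big[-\varepsilon_N\delta_N-g_N\big],$$ where $E_0,E_N$ are the first and last standard unit vectors of $\mathbb{R}^{N+1}$. If $\sigma_0=-1$,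 $\sigma_N=1$ and $g_0=g_N=0$, then for all $t\ge0$ $$\mathbf{U}(t)^T\mathcal{P}\mathbf{U}(t)+2\int_0^t\sum_{e=1}^K\big(\sqrt{\mathcal{E}^e}\mathcal{D}_x^eR_e\mathbf{U}\big)^T\mathcal{P}^e\big(\sqrt{\mathcal{E}^e}\mathcal{D}_x^eR_e\mathbf{U}\big)\,ds\le\mathbf{U}(0)^T\mathcal{P}\mathbf{U}(0).$$ That is, the energy stability of the single-element scheme is retained after continuous Galerkin merging of elements.
   Context: For element $e=[X_{e-1},X_e]$ with Gauss–Lobatto nodes $x^e_0<\dots<x^e_p$ (endpoints included), positive weights $w^e_k$ and degree-$p$ Lagrange basis $\ell^e_j$: $\mathcal{P}^e=\mathrm{diag}(w^e_0,\dots,w^e_p)$, $(\mathcal{Q}_x^e)_{ij}=\int_{X_{e-1}}^{X_e}\ell^e_i(\ell^e_j)'dx$, $\mathcal{D}_x^e=(\mathcal{P}^e)^{-1}\mathcal{Q}_x^e$. Global nodes are numbered left to right, local node $j$ of element $e$ is global node $(e-1)p+j$, and $R_e\in\mathbb{R}^{(p+1)\times(N+1)}$ is the Boolean matrix selecting those global entries. $\sqrt{\cdot}$ of a nonnegative diagonal matrix is taken entrywise. *)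

theory Defs
  imports "HOL-Analysis.Analysis" "HOL-Computational_Algebra.Polynomial"
begin

text \<open>Inner index runs over 0..n (i.e. inner dimension n+1).\<close>
definition mmul :: "nat \<Rightarrow> (nat \<Rightarrow> nat \<Rightarrow> real) \<Rightarrow> (nat \<Rightarrow> nat \<Rightarrow> real) \<Rightarrow> nat \<Rightarrow> nat \<Rightarrow> real" where
  "mmul n A B = (\<lambda>i j. \<Sum>k\<le>n. A i k * B k j)"

definition mvec :: "nat \<Rightarrow> (nat \<Rightarrow> nat \<Rightarrow> real) \<Rightarrow> (nat \<Rightarrow> real) \<Rightarrow> nat \<Rightarrow> real" where
  "mvec n A v = (\<lambda>i. \<Sum>k\<le>n. A i k * v k)"

definition dotp :: "nat \<Rightarrow> (nat \<Rightarrow> real) \<Rightarrow> (nat \<Rightarrow> real) \<Rightarrow> real" where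
  "dotp n u v = (\<Sum>k\<le>n. u k * v k)"

definition transp :: "(nat \<Rightarrow> nat \<Rightarrow> real) \<Rightarrow> nat \<Rightarrow> nat \<Rightarrow> real" where
  "transp A = (\<lambda>i j. A j i)"

definition diagm :: "(nat \<Rightarrow> real) \<Rightarrow> nat \<Rightarrow> nat \<Rightarrow> real" where
  "diagm d = (\<lambda>i j. if i = j then d i else 0)"

text \<open>Entrywise square root (used for nonnegative diagonal matrices).\<close>
definition msqrt :: "(nat \<Rightarrow> nat \<Rightarrow> real) \<Rightarrow> nat \<Rightarrow> nat \<Rightarrow> real" where
  "msqrt M = (\<lambda>i j. sqrt (M i j))"

definition unitv :: "nat \<Rightarrow> nat \<Rightarrow> real" where
  "unitv i = (\<lambda>j. if j = i then 1 else 0)"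

text \<open>Legendre polynomial via Rodrigues' formula.\<close>
definition legendre :: "nat \<Rightarrow> real poly" where
  "legendre n = smult (1 / (2 ^ n * fact n)) ((pderiv ^^ n) ([:-1, 0, 1:] ^ n))"

definition gll_ref_node :: "nat \<Rightarrow> nat \<Rightarrow> real" where
  "gll_ref_node p k =
     sorted_list_of_set ({-1, 1} \<union> {\<xi>. poly (pderiv (legendre p)) \<xi> = 0}) ! k"

definition gll_ref_weight :: "nat \<Rightarrow> nat \<Rightarrow> real" where
  "gll_ref_weight p k =
     2 / (real p * (real p + 1) * (poly (legendre p) (gll_ref_node p k))\<^sup>2)"

definition elem_node :: "nat \<Rightarrow> (nat \<Rightarrow> real) \<Rightarrow> nat \<Rightarrow> nat \<Rightarrow> real" where
  "elem_node p X e k = X (e - 1) + (gll_ref_node p k + 1) / 2 * (X e - X (e - 1))"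

definition elem_weight :: "nat \<Rightarrow> (nat \<Rightarrow> real) \<Rightarrow> nat \<Rightarrow> nat \<Rightarrow> real" where
  "elem_weight p X e k = (X e - X (e - 1)) / 2 * gll_ref_weight p k"

definition lagr :: "nat \<Rightarrow> (nat \<Rightarrow> real) \<Rightarrow> nat \<Rightarrow> nat \<Rightarrow> real poly" where
  "lagr p X e j = (\<Prod>m\<in>{0..p} - {j}.
      smult (1 / (elem_node p X e j - elem_node p X e m)) [:- elem_node p X e m, 1:])"

definition Pe :: "nat \<Rightarrow> (nat \<Rightarrow> real) \<Rightarrow> nat \<Rightarrow> nat \<Rightarrow> nat \<Rightarrow> real" where
  "Pe p X e = diagm (elem_weight p X e)"

definition Qe :: "nat \<Rightarrow> (nat \<Rightarrow> real) \<Rightarrow> nat \<Rightarrow> nat \<Rightarrow> nat \<Rightarrow> real" where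
  "Qe p X e = (\<lambda>i j. integral {X (e - 1) .. X e}
       (\<lambda>x. poly (lagr p X e i) x * poly (pderiv (lagr p X e j)) x))"

text \<open>D = P^{-1} Q (P diagonal, so P^{-1} = diag of inverses).\<close>
definition De :: "nat \<Rightarrow> (nat \<Rightarrow> real) \<Rightarrow> nat \<Rightarrow> nat \<Rightarrow> nat \<Rightarrow> real" where
  "De p X e = mmul p (diagm (\<lambda>k. inverse (elem_weight p X e k))) (Qe p X e)"

text \<open>Boolean restriction matrix R_e, size (p+1) x (N+1): local j of element e is global (e-1)p+j.\<close>
definition Rsel :: "nat \<Rightarrow> nat \<Rightarrow> nat \<Rightarrow> nat \<Rightarrow> real" where
  "Rsel p e = (\<lambda>j g. if g = (e - 1) * p + j then 1 else 0)"

definition Ee :: "nat \<Rightarrow> nat \<Rightarrow> (nat \<Rightarrow> real) \<Rightarrow> nat \<Rightarrow> nat \<Rightarrow> nat \<Rightarrow> real" where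
  "Ee K p eps e = diagm (mvec (K * p) (Rsel p e) eps)"

definition SDe :: "nat \<Rightarrow> nat \<Rightarrow> (nat \<Rightarrow> real) \<Rightarrow> (nat \<Rightarrow> real) \<Rightarrow> nat \<Rightarrow> nat \<Rightarrow> nat \<Rightarrow> real" where
  "SDe K p X eps e = mmul p (msqrt (Ee K p eps e)) (De p X e)"

definition assemble :: "nat \<Rightarrow> nat \<Rightarrow> (nat \<Rightarrow> nat \<Rightarrow> nat \<Rightarrow> real) \<Rightarrow> nat \<Rightarrow> nat \<Rightarrow> real" where
  "assemble K p M = (\<lambda>i j. \<Sum>e\<in>{1..K}.
      mmul p (transp (Rsel p e)) (mmul p (M e) (Rsel p e)) i j)"

definition Pglob :: "nat \<Rightarrow> nat \<Rightarrow> (nat \<Rightarrow> real) \<Rightarrow> nat \<Rightarrow> nat \<Rightarrow> real" where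
  "Pglob K p X = assemble K p (Pe p X)"

definition Qglob :: "nat \<Rightarrow> nat \<Rightarrow> (nat \<Rightarrow> real) \<Rightarrow> nat \<Rightarrow> nat \<Rightarrow> real" where
  "Qglob K p X = assemble K p (Qe p X)"

definition Aglob :: "nat \<Rightarrow> nat \<Rightarrow> (nat \<Rightarrow> real) \<Rightarrow> (nat \<Rightarrow> real) \<Rightarrow> nat \<Rightarrow> nat \<Rightarrow> real" where
  "Aglob K p X eps = assemble K p
     (\<lambda>e. mmul p (transp (SDe K p X eps e)) (mmul p (Pe p X e) (SDe K p X eps e)))"

definition elem_diss :: "nat \<Rightarrow> nat \<Rightarrow> (nat \<Rightarrow> real) \<Rightarrow> (nat \<Rightarrow> real) \<Rightarrow> (nat \<Rightarrow> real) \<Rightarrow> nat \<Rightarrow> real" where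
  "elem_diss K p X eps U e =
     (let v = mvec p (SDe K p X eps e) (mvec (K * p) (Rsel p e) U)
      in dotp p v (mvec p (Pe p X e) v))"

end

theory Submission
  imports Defs
begin

lemma poly_rolle:
  fixes q :: "real poly"
  assumes "a < b" "poly q a = 0" "poly q b = 0"
  shows "\<exists>z. a < z \<and> z < b \<and> poly (pderiv q) z = 0"
proof -
  have "continuous_on {a..b} (poly q)" by (intro continuous_intros)
  moreover have "\<And>x. poly q differentiable (at x)"
    using poly_DERIV real_differentiable_def by blast
  ultimately obtain z where z: "a < z" "z < b" "DERIV (poly q) z :> 0"
    using Rolle[of a b "poly q"] assms by auto
  have "DERIV (poly q) z :> poly (pderiv q) z" by (rule poly_DERIV)
  with z(3) have "poly (pderiv q) z = 0" using DERIV_unique by blast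
  with z show ?thesis by blast
qed

lemma rolle_set:
  fixes q :: "real poly"
  shows "finite S \<Longrightarrow> (\<forall>x\<in>S. poly q x = 0) \<Longrightarrow>
    \<exists>T. finite T \<and> card T = card S - 1 \<and> (\<forall>x\<in>T. poly (pderiv q) x = 0 \<and> Min S < x \<and> x < Max S)"
proof (induction "card S" arbitrary: S)
  case 0
  then show ?case by (intro exI[of _ "{}"]) auto
next
  case (Suc n)
  show ?case
  proof (cases "n = 0")
    case True
    then show ?thesis using Suc by (intro exI[of _ "{}"]) auto
  next
    case False
    define m where "m = Max S"
    define S' where "S' = S - {m}"
    have ne: "S \<noteq> {}" using Suc(2) by auto
    have mS: "m \<in> S" unfolding m_def using Suc(3) ne by simp
    have cS': "card S' = n" unfolding S'_def using Suc(2) mS Suc(3) by simp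
    have fS': "finite S'" unfolding S'_def using Suc(3) by simp
    have neS': "S' \<noteq> {}" using cS' False by auto
    obtain T' where T': "finite T'" "card T' = card S' - 1"
      "\<forall>x\<in>T'. poly (pderiv q) x = 0 \<and> Min S' < x \<and> x < Max S'"
      using Suc(1)[of S'] cS' fS' Suc(4) unfolding S'_def by auto
    define m' where "m' = Max S'"
    have m'S': "m' \<in> S'" unfolding m'_def using fS' neS' by simp
    have "m' < m"
    proof -
      have "m' \<le> m" using m'S' Suc(3) unfolding m_def S'_def by simp
      moreover have "m' \<noteq> m" using m'S' unfolding S'_def by auto
      ultimately show ?thesis by simp
    qed
    moreover have "poly q m' = 0" "poly q m = 0" using m'S' mS Suc(4) unfolding S'_def by auto
    ultimately obtain z where z: "m' < z" "z < m" "poly (pderiv q) z = 0"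
      using poly_rolle by blast
    have zT': "z \<notin> T'" using T'(3) z(1) unfolding m'_def by auto
    have minle: "Min S \<le> Min S'" using fS' neS' Suc(3) unfolding S'_def
      by (simp add: Min_antimono)
    have minS': "Min S' \<le> m'" unfolding m'_def using fS' neS' by simp
    show ?thesis
    proof (intro exI[of _ "insert z T'"] conjI ballI)
      show "finite (insert z T')" using T' by simp
      show "card (insert z T') = card S - 1"
        using T' zT' cS' False Suc(2) by simp
      fix x assume x: "x \<in> insert z T'"
      show "poly (pderiv q) x = 0" using x z T' by auto
      show "Min S < x" using x z T'(3) minle minS' by fastforce
      show "x < Max S" using x z T'(3) \<open>m' < m\<close> unfolding m_def m'_def by fastforce
    qed
  qed
qed


lemma dvd_pderiv_pow:
  fixes g q :: "real poly"
  assumes "g ^ Suc m dvd q" shows "g ^ m dvd pderiv q"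
proof -
  obtain h where h: "q = g ^ Suc m * h" using assms by (auto elim: dvdE)
  have "pderiv q = g ^ m * (smult (of_nat (Suc m)) (pderiv g * h) + g * pderiv h)"
    unfolding h pderiv_mult pderiv_power_Suc by (simp add: algebra_simps)
  then show ?thesis by simp
qed

abbreviation "gsq \<equiv> [:-1, 0, 1:] :: real poly"

lemma iter_dvd: "k \<le> p \<Longrightarrow> gsq ^ (p - k) dvd (pderiv ^^ k) (gsq ^ p)"
proof (induction k)
  case 0 then show ?case by simp
next
  case (Suc k)
  then have "gsq ^ Suc (p - Suc k) dvd (pderiv ^^ k) (gsq ^ p)"
    by (metis Suc_diff_Suc Suc_le_lessD less_imp_le_nat)
  then show ?case using dvd_pderiv_pow by simp
qed

lemma iter_root:
  assumes "k < p" "x = 1 \<or> x = -1"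
  shows "poly ((pderiv ^^ k) (gsq ^ p)) x = 0"
proof -
  have "gsq ^ (p - k) dvd (pderiv ^^ k) (gsq ^ p)" using iter_dvd assms by simp
  moreover have "gsq dvd gsq ^ (p - k)" using assms(1)
    by (metis Suc_diff_Suc dvd_power zero_less_Suc zero_less_diff)
  ultimately have "gsq dvd (pderiv ^^ k) (gsq ^ p)" using dvd_trans by blast
  then obtain h where "(pderiv ^^ k) (gsq ^ p) = gsq * h" by (auto elim: dvdE)
  then show ?thesis using assms(2) by auto
qed

lemma iter_roots_interior:
  "k \<le> p \<Longrightarrow> \<exists>R. finite R \<and> card R = k \<and>
     (\<forall>x\<in>R. -1 < x \<and> x < 1 \<and> poly ((pderiv ^^ k) (gsq ^ p)) x = 0)"
proof (induction k)
  case 0 then show ?case by (intro exI[of _ "{}"]) auto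
next
  case (Suc k)
  then obtain R where R: "finite R" "card R = k"
     "\<forall>x\<in>R. -1 < x \<and> x < 1 \<and> poly ((pderiv ^^ k) (gsq ^ p)) x = 0" by auto
  define S where "S = insert (-1) (insert 1 R)"
  have fS: "finite S" using R unfolding S_def by simp
  have n1: "1 \<notin> R" "-1 \<notin> R" using R by auto
  have cS: "card S = Suc (Suc k)" using R n1 unfolding S_def by simp
  have rS: "\<forall>x\<in>S. poly ((pderiv ^^ k) (gsq ^ p)) x = 0"
    using R iter_root[of k p] Suc(2) unfolding S_def by auto
  have minS: "Min S = -1" using fS R unfolding S_def by (intro Min_eqI) auto
  have maxS: "Max S = 1" using fS R unfolding S_def by (intro Max_eqI) auto
  obtain T where T: "finite T" "card T = card S - 1"
    "\<forall>x\<in>T. poly (pderiv ((pderiv ^^ k) (gsq ^ p))) x = 0 \<and> Min S < x \<and> x < Max S"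
    using rolle_set[OF fS rS] by blast
  show ?case using T cS minS maxS by (intro exI[of _ T]) auto
qed

lemma degree_gsq: "degree gsq = 2" by simp

lemma degree_iter: "k \<le> 2 * p \<Longrightarrow> degree ((pderiv ^^ k) (gsq ^ p)) = 2 * p - k"
proof (induction k)
  case 0 then show ?case by (simp add: degree_power_eq)
next
  case (Suc k) then show ?case by (simp add: degree_pderiv)
qed

lemma gll_roots:
  assumes p: "p \<ge> 1"
  shows "\<exists>T. finite T \<and> card T = p - 1 \<and> (\<forall>x\<in>T. -1 < x \<and> x < 1) \<and>
     {\<xi>. poly (pderiv (legendre p)) \<xi> = 0} = T"
proof -
  obtain R where R: "finite R" "card R = p"
     "\<forall>x\<in>R. -1 < x \<and> x < 1 \<and> poly ((pderiv ^^ p) (gsq ^ p)) x = 0"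
    using iter_roots_interior[of p p] by auto
  have neR: "R \<noteq> {}" using R p by auto
  obtain T where T: "finite T" "card T = card R - 1"
    "\<forall>x\<in>T. poly (pderiv ((pderiv ^^ p) (gsq ^ p))) x = 0 \<and> Min R < x \<and> x < Max R"
    using rolle_set[of R "(pderiv ^^ p) (gsq ^ p)"] R by auto
  have "Min R \<in> R" "Max R \<in> R" using R neR by auto
  then have Tin: "\<forall>x\<in>T. -1 < x \<and> x < 1" using T R by fastforce
  define c :: real where "c = 1 / (2 ^ p * fact p)"
  have c0: "c \<noteq> 0" unfolding c_def by simp
  have leg: "pderiv (legendre p) = smult c (pderiv ((pderiv ^^ p) (gsq ^ p)))"
    unfolding legendre_def c_def by (simp add: pderiv_smult)
  have Q0: "pderiv ((pderiv ^^ p) (gsq ^ p)) \<noteq> 0"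
    using degree_iter[of p p] p by (simp add: pderiv_eq_0_iff)
  have dQ: "degree (pderiv ((pderiv ^^ p) (gsq ^ p))) = p - 1"
    using degree_iter[of p p] by (simp add: degree_pderiv)
  define Z where "Z = {\<xi>. poly (pderiv (legendre p)) \<xi> = 0}"
  have Zeq: "Z = {\<xi>. poly (pderiv ((pderiv ^^ p) (gsq ^ p))) \<xi> = 0}"
    unfolding Z_def leg using c0 by simp
  have fZ: "finite Z" unfolding Zeq using Q0 poly_roots_finite by blast
  have cZ: "card Z \<le> p - 1" unfolding Zeq using card_poly_roots_bound[OF Q0] dQ by simp
  have TZ: "T \<subseteq> Z" unfolding Zeq using T by auto
  have "T = Z" using card_subset_eq[OF fZ TZ] cZ T R card_mono[OF fZ TZ] by simp
  then show ?thesis using T R Tin unfolding Z_def by auto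
qed


lemma gll_node_props:
  assumes p: "p \<ge> 1"
  shows "gll_ref_node p 0 = -1 \<and> gll_ref_node p p = 1 \<and>
    (\<forall>i j. i < j \<longrightarrow> j \<le> p \<longrightarrow> gll_ref_node p i < gll_ref_node p j)"
proof -
  obtain T where T: "finite T" "card T = p - 1" "\<forall>x\<in>T. -1 < x \<and> x < 1"
     "{\<xi>. poly (pderiv (legendre p)) \<xi> = 0} = T"
    using gll_roots[OF p] by blast
  define S where "S = {-1, 1} \<union> {\<xi>. poly (pderiv (legendre p)) \<xi> = 0}"
  have S: "S = insert (-1) (insert 1 T)" unfolding S_def T(4) by auto
  have n1: "1 \<notin> T" "-1 \<notin> T" using T by auto
  have fS: "finite S" using S T by simp
  have cS: "card S = p + 1" using S T n1 p by simp
  have Sin: "\<forall>x\<in>S. -1 \<le> x \<and> x \<le> 1" unfolding S using T(3) by fastforce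
  define xs where "xs = sorted_list_of_set S"
  have node: "\<And>k. gll_ref_node p k = xs ! k" unfolding gll_ref_node_def xs_def S_def by simp
  have len: "length xs = p + 1" unfolding xs_def using cS by simp
  have setxs: "set xs = S" unfolding xs_def using fS by simp
  have sw: "sorted_wrt (<) xs" unfolding xs_def by simp
  have mono: "\<And>i j. i < j \<Longrightarrow> j \<le> p \<Longrightarrow> xs ! i < xs ! j"
    using sw len by (simp add: sorted_wrt_iff_nth_less)
  have inS: "\<And>i. i \<le> p \<Longrightarrow> xs ! i \<in> S" using setxs len
    by (metis Suc_eq_plus1 le_imp_less_Suc nth_mem)
  have "-1 \<in> set xs" using setxs S by simp
  then obtain j where j: "j < length xs" "xs ! j = -1" by (metis in_set_conv_nth)
  have x0: "xs ! 0 = -1"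
  proof (cases "j = 0")
    case False
    then have "xs ! 0 < -1" using mono[of 0 j] j len by simp
    then show ?thesis using Sin inS[of 0] by fastforce
  qed (use j in simp)
  have "1 \<in> set xs" using setxs S by simp
  then obtain j where j: "j < length xs" "xs ! j = 1" by (metis in_set_conv_nth)
  have xp: "xs ! p = 1"
  proof (cases "j = p")
    case False
    then have "1 < xs ! p" using mono[of j p] j len by simp
    then show ?thesis using Sin inS[of p] by fastforce
  qed (use j in simp)
  show ?thesis using x0 xp mono unfolding node by blast
qed

lemma elem_node_props:
  assumes p: "p \<ge> 1" and X: "X (e - 1) < X e"
  shows "elem_node p X e 0 = X (e - 1)" "elem_node p X e p = X e"
    "\<And>i j. i < j \<Longrightarrow> j \<le> p \<Longrightarrow> elem_node p X e i < elem_node p X e j"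
proof -
  note G = gll_node_props[OF p]
  show "elem_node p X e 0 = X (e - 1)" "elem_node p X e p = X e"
    unfolding elem_node_def using G by auto
  fix i j assume "i < j" "j \<le> p"
  then have "gll_ref_node p i < gll_ref_node p j" using G by blast
  then show "elem_node p X e i < elem_node p X e j"
    unfolding elem_node_def using X by (simp add: divide_strict_right_mono mult_strict_right_mono)
qed

lemma lagr_nodal:
  assumes p: "p \<ge> 1" and X: "X (e - 1) < X e" and jm: "j \<le> p" "m \<le> p"
  shows "poly (lagr p X e j) (elem_node p X e m) = (if m = j then 1 else 0)"
proof -
  have inj: "\<And>a b. a \<le> p \<Longrightarrow> b \<le> p \<Longrightarrow> a \<noteq> b \<Longrightarrow> elem_node p X e a \<noteq> elem_node p X e b"
    using elem_node_props(3)[OF p X] by (metis less_irrefl nat_neq_iff)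
  show ?thesis
  proof (cases "m = j")
    case True
    have "poly (lagr p X e j) (elem_node p X e m) =
      (\<Prod>k\<in>{0..p} - {j}. 1 / (elem_node p X e j - elem_node p X e k) * (elem_node p X e m - elem_node p X e k))"
      unfolding lagr_def poly_prod by (intro prod.cong refl) (simp add: diff_divide_distrib)
    also have "\<dots> = 1" using True inj jm by (intro prod.neutral) fastforce
    finally show ?thesis using True by simp
  next
    case False
    have "poly (lagr p X e j) (elem_node p X e m) =
      (\<Prod>k\<in>{0..p} - {j}. 1 / (elem_node p X e j - elem_node p X e k) * (elem_node p X e m - elem_node p X e k))"
      unfolding lagr_def poly_prod by (intro prod.cong refl) (simp add: diff_divide_distrib)
    also have "\<dots> = 0" using False jm by (intro prod_zero) (auto intro!: bexI[of _ m])
    finally show ?thesis using False by simp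
  qed
qed


lemma pderiv_sum': "pderiv (sum f A) = (\<Sum>x\<in>A. pderiv (f x))"
  using higher_pderiv_sum[of 1 f A] by simp

lemma elem_sbp:
  assumes p: "p \<ge> 1" and X: "X (e - 1) < X e"
  shows "dotp p v (mvec p (Qe p X e) v) = ((v p)\<^sup>2 - (v 0)\<^sup>2) / 2"
proof -
  define a where "a = X (e - 1)"
  define b where "b = X e"
  define l where "l = lagr p X e"
  define q where "q = (\<Sum>i\<le>p. smult (v i) (l i))"
  have ab: "a \<le> b" using X unfolding a_def b_def by simp
  have int_ij: "\<And>i j. ((\<lambda>x. poly (l i) x * poly (pderiv (l j)) x) has_integral Qe p X e i j) {a..b}"
  proof -
    fix i j
    have "(\<lambda>x. poly (l i) x * poly (pderiv (l j)) x) integrable_on {a..b}"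
      by (intro integrable_continuous_real continuous_intros)
    then show "((\<lambda>x. poly (l i) x * poly (pderiv (l j)) x) has_integral Qe p X e i j) {a..b}"
      unfolding Qe_def a_def b_def l_def by (rule integrable_integral)
  qed
  have H: "((\<lambda>x. \<Sum>i\<le>p. \<Sum>j\<le>p. v i * v j * (poly (l i) x * poly (pderiv (l j)) x))
      has_integral (\<Sum>i\<le>p. \<Sum>j\<le>p. v i * v j * Qe p X e i j)) {a..b}"
    by (intro has_integral_sum finite_atMost has_integral_mult_right int_ij)
  have eqf: "\<And>x. poly q x * poly (pderiv q) x =
      (\<Sum>i\<le>p. \<Sum>j\<le>p. v i * v j * (poly (l i) x * poly (pderiv (l j)) x))"
    unfolding q_def pderiv_sum' poly_sum pderiv_smult poly_smult sum_product
    by (intro sum.cong refl) (simp add: algebra_simps)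
  have D: "\<And>x. ((\<lambda>x. (poly q x)\<^sup>2 / 2) has_real_derivative poly q x * poly (pderiv q) x) (at x within {a..b})"
    by (rule DERIV_subset[OF _ subset_UNIV]) (auto intro!: derivative_eq_intros)
  have F: "((\<lambda>x. poly q x * poly (pderiv q) x) has_integral ((poly q b)\<^sup>2 / 2 - (poly q a)\<^sup>2 / 2)) {a..b}"
    using D by (intro fundamental_theorem_of_calculus[OF ab])
      (simp add: has_real_derivative_iff_has_vector_derivative[symmetric])
  have I: "(\<Sum>i\<le>p. \<Sum>j\<le>p. v i * v j * Qe p X e i j) = (poly q b)\<^sup>2 / 2 - (poly q a)\<^sup>2 / 2"
    using has_integral_unique[OF H F[unfolded eqf]] .
  have qa: "poly q a = v 0"
  proof -
    have "poly q a = (\<Sum>i\<le>p. if 0 = i then v i else 0)"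
      unfolding q_def poly_sum poly_smult l_def a_def
      using lagr_nodal[OF p X, of _ 0] elem_node_props(1)[OF p X] by (intro sum.cong refl) auto
    then show ?thesis by simp
  qed
  have qb: "poly q b = v p"
  proof -
    have "poly q b = (\<Sum>i\<le>p. if p = i then v i else 0)"
      unfolding q_def poly_sum poly_smult l_def b_def
      using lagr_nodal[OF p X, of _ p] elem_node_props(2)[OF p X] by (intro sum.cong refl) auto
    then show ?thesis by simp
  qed
  have "dotp p v (mvec p (Qe p X e) v) = (\<Sum>i\<le>p. \<Sum>j\<le>p. v i * v j * Qe p X e i j)"
    unfolding dotp_def mvec_def sum_distrib_left by (intro sum.cong refl) (simp add: algebra_simps)
  then show ?thesis using I qa qb by (simp add: diff_divide_distrib)
qed


lemma mvec_mmul: "mvec n (mmul m A B) v = mvec m A (mvec n B v)"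
  unfolding mvec_def mmul_def
  by (auto simp: sum_distrib_left sum_distrib_right algebra_simps intro!: ext sum.swap[THEN trans])

lemma dotp_mvec_transp: "dotp n u (mvec m (transp A) w) = dotp m (mvec n A u) w"
  unfolding dotp_def mvec_def transp_def
  by (auto simp: sum_distrib_left sum_distrib_right algebra_simps intro!: sum.swap[THEN trans])

lemma mvec_sumM: "mvec n (\<lambda>i j. \<Sum>e\<in>E. M e i j) v i = (\<Sum>e\<in>E. mvec n (M e) v i)"
  unfolding mvec_def by (simp add: sum_distrib_right sum.swap[of _ E])

lemma dotp_sum: "dotp n u (\<lambda>i. \<Sum>e\<in>E. f e i) = (\<Sum>e\<in>E. dotp n u (f e))"
  unfolding dotp_def by (simp add: sum_distrib_left sum.swap[of _ E])

lemma assemble_bilin: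
  "dotp N U (mvec N (assemble K p M) V) =
     (\<Sum>e\<in>{1..K}. dotp p (mvec N (Rsel p e) U) (mvec p (M e) (mvec N (Rsel p e) V)))"
proof -
  have "mvec N (assemble K p M) V = (\<lambda>i. \<Sum>e\<in>{1..K}.
      mvec N (mmul p (transp (Rsel p e)) (mmul p (M e) (Rsel p e))) V i)"
    unfolding assemble_def by (intro ext mvec_sumM)
  then show ?thesis
    by (simp add: dotp_sum mvec_mmul dotp_mvec_transp)
qed

lemma diss_form:
  "dotp p w (mvec p (mmul p (transp S) (mmul p P S)) w) = dotp p (mvec p S w) (mvec p P (mvec p S w))"
  by (simp add: mvec_mmul dotp_mvec_transp)

lemma Rsel_apply:
  "mvec N (Rsel p e) U j = (if (e - 1) * p + j \<le> N then U ((e - 1) * p + j) else 0)"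
  unfolding mvec_def Rsel_def by (simp add: if_distrib[of "\<lambda>x. x * _"] cong: if_cong)

lemma telescope: "(\<Sum>e\<in>{1..(n::nat)}. f e - f (e - 1)) = f n - (f 0 :: real)"
  by (induction n) (auto simp: sum.cl_ivl_Suc)

lemma Pe_sym: "dotp p u (mvec p (Pe p X e) w) = dotp p w (mvec p (Pe p X e) u)"
  unfolding dotp_def mvec_def Pe_def diagm_def
  by (simp add: if_distrib[of "\<lambda>x. x * _"] cong: if_cong) (simp add: algebra_simps)


lemma Qglob_quad:
  assumes K: "K \<ge> 1" and p: "p \<ge> 1" and mono: "\<forall>e<K. X e < X (Suc e)"
  shows "dotp (K * p) U (mvec (K * p) (Qglob K p X) U) = ((U (K * p))\<^sup>2 - (U 0)\<^sup>2) / 2"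
proof -
  have "dotp (K * p) U (mvec (K * p) (Qglob K p X) U) =
     (\<Sum>e\<in>{1..K}. (U (e * p))\<^sup>2 / 2 - (U ((e - 1) * p))\<^sup>2 / 2)"
    unfolding Qglob_def assemble_bilin
  proof (intro sum.cong refl)
    fix e assume e: "e \<in> {1..K}"
    have X: "X (e - 1) < X e" using mono e by (metis Suc_diff_1 atLeastAtMost_iff diff_less less_le_trans zero_less_one le_less_trans less_one not_le)
    have "(e - 1) * p + p = e * p" using e by (cases e) auto
    moreover have "e * p \<le> K * p" using e by simp
    ultimately show "dotp p (mvec (K * p) (Rsel p e) U) (mvec p (Qe p X e) (mvec (K * p) (Rsel p e) U))
      = (U (e * p))\<^sup>2 / 2 - (U ((e - 1) * p))\<^sup>2 / 2"
      unfolding elem_sbp[OF p X] Rsel_apply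
      by (auto simp: diff_divide_distrib)
  qed
  also have "\<dots> = (U (K * p))\<^sup>2 / 2 - (U (0 * p))\<^sup>2 / 2"
    using telescope[of "\<lambda>e. (U (e * p))\<^sup>2 / 2" K] by simp
  finally show ?thesis by (simp add: diff_divide_distrib)
qed

theorem proposition4:
  fixes K p :: nat and X :: "nat \<Rightarrow> real" and a :: real
    and eps :: "real \<Rightarrow> nat \<Rightarrow> real"
    and U U' :: "real \<Rightarrow> nat \<Rightarrow> real"
    and \<sigma>\<^sub>0 \<sigma>\<^sub>N g\<^sub>0 g\<^sub>N :: real
  assumes K: "K \<ge> 1" and p: "p \<ge> 1"
    and mesh0: "X 0 = 0" and meshK: "X K = 1"
    and mesh_mono: "\<forall>e<K. X e < X (Suc e)"
    and a: "a \<ge> 0"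
    and eps_nonneg: "\<forall>j\<le>K * p. \<forall>t\<ge>0. eps t j \<ge> 0"
    and eps_cont: "\<forall>j\<le>K * p. continuous_on {0..} (\<lambda>t. eps t j)"
    and U_deriv: "\<forall>j\<le>K * p. \<forall>t\<ge>0.
                    ((\<lambda>s. U s j) has_real_derivative U' t j) (at t within {0..})"
    and U'_cont: "\<forall>j\<le>K * p. continuous_on {0..} (\<lambda>t. U' t j)"
    and ode: "\<forall>t\<ge>0. \<forall>i\<le>K * p.
      (let N = K * p;
           \<delta>\<^sub>0 = mvec p (De p X 1) (mvec N (Rsel p 1) (U t)) 0;
           \<delta>\<^sub>N = mvec p (De p X K) (mvec N (Rsel p K) (U t)) p
       in mvec N (Pglob K p X) (U' t) i + a * mvec N (Qglob K p X) (U t) i =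
            - mvec N (Aglob K p X (eps t)) (U t) i
            - eps t 0 * \<delta>\<^sub>0 * unitv 0 i + eps t N * \<delta>\<^sub>N * unitv N i
            + \<sigma>\<^sub>0 * unitv 0 i * (a * U t 0 - eps t 0 * \<delta>\<^sub>0 - g\<^sub>0)
            + \<sigma>\<^sub>N * unitv N i * (- eps t N * \<delta>\<^sub>N - g\<^sub>N))"
    and sig0: "\<sigma>\<^sub>0 = -1" and sigN: "\<sigma>\<^sub>N = 1"
    and g0: "g\<^sub>0 = 0" and gN: "g\<^sub>N = 0"
  shows "\<forall>t\<ge>0.
     dotp (K * p) (U t) (mvec (K * p) (Pglob K p X) (U t))
     + 2 * integral {0..t} (\<lambda>s. \<Sum>e\<in>{1..K}. elem_diss K p X (eps s) (U s) e)
     \<le> dotp (K * p) (U 0) (mvec (K * p) (Pglob K p X) (U 0))"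
proof (intro allI impI)
  fix T :: real assume T: "T \<ge> 0"
  define N where "N = K * p"
  define P where "P = Pglob K p X"
  define E where "E = (\<lambda>s. dotp N (U s) (mvec N P (U s)))"
  define D where "D = (\<lambda>s. \<Sum>e\<in>{1..K}. elem_diss K p X (eps s) (U s) e)"
  have sub: "{0..T} \<subseteq> {0::real..}" by auto
  have UD: "\<And>s j. s \<in> {0..T} \<Longrightarrow> j \<le> N \<Longrightarrow>
      ((\<lambda>s. U s j) has_real_derivative U' s j) (at s within {0..T})"
  proof -
    fix s j assume s: "s \<in> {0..T}" and j: "j \<le> N"
    then have "((\<lambda>s. U s j) has_real_derivative U' s j) (at s within {0..})"
      using U_deriv by (auto simp: N_def)
    then show "((\<lambda>s. U s j) has_real_derivative U' s j) (at s within {0..T})"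
      using DERIV_subset sub by blast
  qed
  have cU: "\<And>j. j \<le> N \<Longrightarrow> continuous_on {0..T} (\<lambda>s. U s j)"
    using UD by (intro DERIV_continuous_on) blast
  have ceps: "\<And>j. j \<le> N \<Longrightarrow> continuous_on {0..T} (\<lambda>s. eps s j)"
    using eps_cont continuous_on_subset[OF _ sub] by (auto simp: N_def)
  have c1: "\<And>e j. continuous_on {0..T} (\<lambda>s. mvec N (Rsel p e) (U s) j)"
    unfolding mvec_def by (auto intro!: continuous_on_sum continuous_on_mult_left cU)
  have c2: "\<And>e j. continuous_on {0..T} (\<lambda>s. mvec N (Rsel p e) (eps s) j)"
    unfolding mvec_def by (auto intro!: continuous_on_sum continuous_on_mult_left ceps)
  have c3: "\<And>e i j. continuous_on {0..T} (\<lambda>s. msqrt (Ee K p (eps s) e) i j)"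
    subgoal for e i j
      unfolding msqrt_def Ee_def diagm_def N_def[symmetric]
      by (cases "i = j") (auto intro!: continuous_on_real_sqrt c2)
    done
  have c4: "\<And>e i j. continuous_on {0..T} (\<lambda>s. SDe K p X (eps s) e i j)"
    unfolding SDe_def mmul_def by (auto intro!: continuous_on_sum continuous_on_mult_right c3)
  have c5: "\<And>e i. continuous_on {0..T} (\<lambda>s. mvec p (SDe K p X (eps s) e) (mvec N (Rsel p e) (U s)) i)"
    unfolding mvec_def[of p] by (auto intro!: continuous_on_sum continuous_on_mult c4 c1)
  have c6: "\<And>e. continuous_on {0..T} (\<lambda>s. elem_diss K p X (eps s) (U s) e)"
    unfolding elem_diss_def Let_def dotp_def mvec_def[of p "Pe p X _"] N_def[symmetric]
    by (auto intro!: continuous_on_sum continuous_on_mult continuous_on_mult_left c5)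
  have cD: "continuous_on {0..T} D"
    unfolding D_def by (intro continuous_on_sum c6)
  have key: "\<And>s. s \<in> {0..T} \<Longrightarrow>
      dotp N (U s) (mvec N P (U' s)) + D s = - a * ((U s N)\<^sup>2 + (U s 0)\<^sup>2) / 2"
  proof -
    fix s assume s: "s \<in> {0..T}"
    define QU where "QU = mvec N (Qglob K p X) (U s)"
    define AU where "AU = mvec N (Aglob K p X (eps s)) (U s)"
    have odei: "\<And>i. i \<le> N \<Longrightarrow>
        mvec N P (U' s) i = - a * QU i - AU i - a * U s 0 * unitv 0 i"
    proof -
      fix i assume i: "i \<le> N"
      show "mvec N P (U' s) i = - a * QU i - AU i - a * U s 0 * unitv 0 i"
        using ode[rule_format, of s i] s i
        unfolding Let_def N_def[symmetric] P_def[symmetric] QU_def[symmetric] AU_def[symmetric]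
          sig0 sigN g0 gN
        by (simp add: algebra_simps)
    qed
    have "dotp N (U s) (mvec N P (U' s)) =
        dotp N (U s) (\<lambda>i. - a * QU i - AU i - a * U s 0 * unitv 0 i)"
      unfolding dotp_def by (intro sum.cong refl) (simp add: odei)
    also have "\<dots> = - a * dotp N (U s) QU - dotp N (U s) AU - a * U s 0 * (\<Sum>k\<le>N. U s k * unitv 0 k)"
      unfolding dotp_def
      by (simp add: algebra_simps sum.distrib sum_subtractf sum_distrib_left)
    also have "(\<Sum>k\<le>N. U s k * unitv 0 k) = U s 0"
      unfolding unitv_def by (simp add: if_distrib[of "\<lambda>x. _ * x"] cong: if_cong)
    also have "dotp N (U s) QU = ((U s N)\<^sup>2 - (U s 0)\<^sup>2) / 2"
      unfolding QU_def N_def using Qglob_quad[OF K p mesh_mono] .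
    also have "dotp N (U s) AU = D s"
      unfolding AU_def D_def Aglob_def assemble_bilin elem_diss_def Let_def diss_form N_def ..
    finally show "dotp N (U s) (mvec N P (U' s)) + D s = - a * ((U s N)\<^sup>2 + (U s 0)\<^sup>2) / 2"
      by (simp add: algebra_simps power2_eq_square)
  qed
  have Psym: "\<And>u w. dotp N u (mvec N P w) = dotp N w (mvec N P u)"
    unfolding P_def Pglob_def assemble_bilin by (intro sum.cong refl Pe_sym)
  have dE: "\<And>s. s \<in> {0..T} \<Longrightarrow>
      (E has_real_derivative 2 * dotp N (U s) (mvec N P (U' s))) (at s within {0..T})"
  proof -
    fix s assume s: "s \<in> {0..T}"
    have "(E has_real_derivative
       (\<Sum>k\<le>N. U' s k * mvec N P (U s) k + U s k * mvec N P (U' s) k)) (at s within {0..T})"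
      unfolding E_def dotp_def mvec_def
      using s by (auto intro!: derivative_eq_intros UD simp: sum_distrib_left algebra_simps sum.distrib)
    moreover have "(\<Sum>k\<le>N. U' s k * mvec N P (U s) k + U s k * mvec N P (U' s) k)
        = 2 * dotp N (U s) (mvec N P (U' s))"
      using Psym[of "U' s" "U s"] unfolding dotp_def by (simp add: sum.distrib)
    ultimately show "(E has_real_derivative 2 * dotp N (U s) (mvec N P (U' s))) (at s within {0..T})"
      by simp
  qed
  define F where "F = (\<lambda>s. E s + 2 * integral {0..s} D)"
  define F' where "F' = (\<lambda>s. 2 * dotp N (U s) (mvec N P (U' s)) + 2 * D s)"
  have dF: "\<And>s. 0 \<le> s \<Longrightarrow> s \<le> T \<Longrightarrow> (F has_derivative (*) (F' s)) (at s within {0..T})"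
  proof -
    fix s assume "0 \<le> s" "s \<le> T"
    then have s: "s \<in> {0..T}" by simp
    have "(F has_real_derivative F' s) (at s within {0..T})"
      unfolding F_def F'_def
      by (intro DERIV_add dE s DERIV_cmult integral_has_real_derivative cD)
    then show "(F has_derivative (*) (F' s)) (at s within {0..T})"
      by (simp add: has_field_derivative_def)
  qed
  obtain x where x: "x \<in> {0..T}" "F T - F 0 = F' x * (T - 0)"
    using mvt_very_simple[OF T dF] by blast
  have "F' x = - a * ((U x N)\<^sup>2 + (U x 0)\<^sup>2)" using key[OF x(1)] unfolding F'_def by simp
  also have "\<dots> \<le> 0" using a by (simp add: mult_nonneg_nonneg)
  finally have "F T \<le> F 0" using x(2) T mult_nonpos_nonneg[of "F' x" T] by simp
  then show "dotp (K * p) (U T) (mvec (K * p) (Pglob K p X) (U T))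
     + 2 * integral {0..T} (\<lambda>s. \<Sum>e\<in>{1..K}. elem_diss K p X (eps s) (U s) e)
     \<le> dotp (K * p) (U 0) (mvec (K * p) (Pglob K p X) (U 0))"
    unfolding F_def E_def D_def N_def P_def by simp
qed

end
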